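(* Assume $\sigma_1(x)=\sigma_1'(0)(x-a_1)$ with $\sigma_1'(0)\ne0$ and $a_1\ne0$ real, and that $\sigma_2(x)=\tfrac12\sigma_2''(0)(x-a_2)(x-b_2)$ (where $\tfrac12\sigma_2''(0)=(q-1)\tau'(0)$) has real zeros with $a_1<0<a_2\le b_2$; assume $\Lambda_q:=\tau'(0)/\sigma_1'(0)<0$. Put $a=b_2$ and $$\rho(x)=|x|^{\alpha}\sqrt{x^{\log_qx-1}}\,\frac{(qa_2/x,\,qa/x;q)_\infty}{(a_1/x;q)_\infty},\qquad q^{\alpha}=\frac{q^{-2}\tfrac12\sigma_2''(0)}{\sigma_1'(0)}.$$ Then there exist polynomials $P_n$, $n\in\mathbb{N}_0$, with $P_n$ of degree $n$ a solution of the q-EHT with $\lambda=\lambda_n$, and nonzero constants $d_n^2$, such that for all $m,n\in\mathbb{N}_0$ $$\int_a^{\infty}P_n(x)P_m(x)\rho(x)\,d_{q^{-1}}x=d_n^2\delta_{mn},$$ i.e. the $P_n$ are orthogonal with respect to $\rho$ supported on $\{q^{-k}a\}_{k\in\mathbb{N}_0}$.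
   Context: Throughout $0<q<1$. For a function $y$ and $\zeta\in\{q,q^{-1}\}$, $D_\zeta y(x)=\frac{y(x)-y(\zeta x)}{(1-\zeta)x}$ for $x\ne0$ and $D_\zeta y(0)=y'(0)$; $[n]_q=\frac{1-q^n}{1-q}$. Let $\sigma_1$ be a real polynomial of degree at most two, $\tau(x)=\tau'(0)x+\tau(0)$ a real polynomial with $\tau'(0)\ne0$, and $\sigma_2(x):=q[\sigma_1(x)+(1-q^{-1})x\tau(x)]$. The q-EHT with parameter $n$ is $\sigma_1(x)D_{q^{-1}}D_qy(x)+\tau(x)D_qy(x)+\lambda_ny(x)=0$, $\lambda_n=-[n]_q\big(\tau'(0)+\tfrac12[n-1]_{q^{-1}}\sigma_1''(0)\big)$. $(\beta;q)_\infty=\prod_{k\ge0}(1-\beta q^k)$, $(\beta_1,\dots,\beta_r;q)_\infty=\prod_i(\beta_i;q)_\infty$. For $q^\alpha=c$ ($c\ne0$), $\alpha$ is any complex number with $e^{\alpha\ln q}=c$ and $|x|^\alpha:=e^{\alpha\ln|x|}$; for $x>0$, $\sqrt{x^{\log_qx-1}}:=\exp\big(\tfrac12(\log_qx-1)\ln x\big)$. For $a>0$, $\int_a^\infty f(x)\,d_{q^{-1}}x=(q^{-1}-1)a\sum_{j\ge0}q^{-j}f(q^{-j}a)$. *)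

theory Defs
  imports "HOL-Analysis.Analysis" "HOL-Computational_Algebra.Polynomial"
begin

definition qnum :: "real \<Rightarrow> int \<Rightarrow> real" where
  "qnum q n = (1 - q powi n) / (1 - q)"

definition qD :: "real \<Rightarrow> (real \<Rightarrow> real) \<Rightarrow> real \<Rightarrow> real" where
  "qD \<zeta> y x = (if x = 0 then deriv y 0 else (y x - y (\<zeta> * x)) / ((1 - \<zeta>) * x))"

definition sigma2 :: "real \<Rightarrow> real poly \<Rightarrow> real poly \<Rightarrow> real poly" where
  "sigma2 q \<sigma>1 \<tau> = smult q (\<sigma>1 + smult (1 - 1/q) ([:0, 1:] * \<tau>))"

definition qEHT_lambda :: "real \<Rightarrow> real poly \<Rightarrow> real poly \<Rightarrow> nat \<Rightarrow> real" where
  "qEHT_lambda q \<sigma>1 \<tau> n =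
     - qnum q (int n) * (poly (pderiv \<tau>) 0
        + 1/2 * qnum (1/q) (int n - 1) * poly (pderiv (pderiv \<sigma>1)) 0)"

definition qEHT_solution :: "real \<Rightarrow> real poly \<Rightarrow> real poly \<Rightarrow> real \<Rightarrow> (real \<Rightarrow> real) \<Rightarrow> bool" where
  "qEHT_solution q \<sigma>1 \<tau> lam y \<longleftrightarrow>
     (\<forall>x. poly \<sigma>1 x * qD (1/q) (qD q y) x + poly \<tau> x * qD q y x + lam * y x = 0)"

definition qpoch_inf :: "real \<Rightarrow> real \<Rightarrow> real" where
  "qpoch_inf \<beta> q = (\<Prod>k. 1 - \<beta> * q ^ k)"

definition rho :: "real \<Rightarrow> complex \<Rightarrow> real \<Rightarrow> real \<Rightarrow> real \<Rightarrow> real \<Rightarrow> complex" where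
  "rho q \<alpha> a1 a2 a x =
     exp (\<alpha> * of_real (ln \<bar>x\<bar>))
     * of_real (exp (1/2 * (log q x - 1) * ln x)
        * qpoch_inf (q * a2 / x) q * qpoch_inf (q * a / x) q / qpoch_inf (a1 / x) q)"

text \<open>The Jackson integral int_a^infinity f(x) d_{q^{-1}}x converges (as a series) to I.\<close>
definition has_qint_inf :: "real \<Rightarrow> (real \<Rightarrow> complex) \<Rightarrow> real \<Rightarrow> complex \<Rightarrow> bool" where
  "has_qint_inf q f a I \<longleftrightarrow>
     (\<lambda>j. of_real ((1/q - 1) * a * (1/q) ^ j) * f ((1/q) ^ j * a)) sums I"

end

theory Submission
  imports Defs
begin


lemma qpoch_conv:
  fixes q \<beta> :: real
  assumes "0 < q" "q < 1"
  shows "convergent_prod (\<lambda>k. 1 - \<beta> * q ^ k)"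
proof -
  have "summable (\<lambda>k. norm ((1 - \<beta> * q ^ k) - 1))"
    using summable_mult[OF summable_geometric[of q], of "\<bar>\<beta>\<bar>"] assms
    by (simp add: abs_mult power_abs)
  then show ?thesis
    by (intro abs_convergent_prod_imp_convergent_prod summable_imp_abs_convergent_prod)
qed

lemma qpoch_pos:
  fixes q \<beta> :: real
  assumes "0 < q" "q < 1" "\<beta> < 1"
  shows "qpoch_inf \<beta> q > 0"
proof -
  have f: "1 - \<beta> * q ^ k > 0" for k
  proof (cases "\<beta> \<le> 0")
    case True then show ?thesis using assms mult_nonpos_nonneg[of \<beta> "q^k"] by simp
  next
    case False
    have "q ^ k \<le> 1" using assms by (simp add: power_le_one)
    then have "\<beta> * q ^ k \<le> \<beta>" using False by (simp add: mult_left_le)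
    then show ?thesis using assms by linarith
  qed
  show ?thesis unfolding qpoch_inf_def
    by (rule has_prod_pos[OF convergent_prod_has_prod[OF qpoch_conv[OF assms(1,2)]] f])
qed

lemma qpoch_shift:
  fixes q \<beta> :: real
  assumes "0 < q" "q < 1" "\<beta> \<noteq> 1"
  shows "qpoch_inf \<beta> q = (1 - \<beta>) * qpoch_inf (\<beta> * q) q"
proof -
  have "(\<Prod>n. 1 - \<beta> * q ^ Suc n) = qpoch_inf \<beta> q / (1 - \<beta> * q ^ 0)"
    unfolding qpoch_inf_def
    by (rule prodinf_split_head[OF qpoch_conv[OF assms(1,2)]]) (use assms in simp)
  moreover have "(\<Prod>n. 1 - \<beta> * q ^ Suc n) = qpoch_inf (\<beta> * q) q"
    unfolding qpoch_inf_def by (simp add: mult.assoc mult.commute mult.left_commute)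
  ultimately show ?thesis using assms by (simp add: field_simps)
qed


lift_definition Dz :: "real \<Rightarrow> real poly \<Rightarrow> real poly" is
  "\<lambda>z p k. coeff p (Suc k) * qnum z (int (Suc k))"
proof -
  fix z :: real and p :: "real poly"
  have "\<forall>\<^sub>\<infinity> k. coeff p (Suc k) = 0"
    unfolding MOST_nat by (rule exI[of _ "degree p"]) (auto intro: coeff_eq_0)
  then show "\<forall>\<^sub>\<infinity> k. coeff p (Suc k) * qnum z (int (Suc k)) = 0"
    by (rule MOST_mono) simp
qed

lemma coeff_Dz: "coeff (Dz z p) k = coeff p (Suc k) * qnum z (int (Suc k))"
  by (simp add: Dz.rep_eq)

lemma Dz_add: "Dz z (p + r) = Dz z p + Dz z r"
  by (simp add: poly_eq_iff coeff_Dz algebra_simps)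

lemma Dz_smult: "Dz z (smult a p) = smult a (Dz z p)"
  by (simp add: poly_eq_iff coeff_Dz algebra_simps)

lemma Dz_diff: "Dz z (p - r) = Dz z p - Dz z r"
  by (simp add: poly_eq_iff coeff_Dz algebra_simps)

lemma poly_as_sum:
  fixes r :: "real poly"
  assumes "degree r \<le> N"
  shows "poly r x = (\<Sum>i\<le>N. coeff r i * x ^ i)"
proof -
  have "poly r x = (\<Sum>i\<le>degree r. coeff r i * x ^ i)" by (rule poly_altdef)
  also have "\<dots> = (\<Sum>i\<le>N. coeff r i * x ^ i)"
    by (rule sum.mono_neutral_left) (use assms le_degree in auto)
  finally show ?thesis .
qed

lemma qnum_nat: "qnum z (int k) = (1 - z ^ k) / (1 - z)"
  by (simp add: qnum_def power_int_of_nat)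

lemma degree_Dz: "degree (Dz z p) \<le> degree p"
  by (rule degree_le) (simp add: coeff_Dz coeff_eq_0)

lemma poly_Dz:
  assumes "z \<noteq> 1"
  shows "qD z (poly p) x = poly (Dz z p) x"
proof (cases "x = 0")
  case True
  have "deriv (poly p) 0 = poly (pderiv p) 0"
    by (rule DERIV_imp_deriv) (rule poly_DERIV)
  then show ?thesis using True assms
    by (simp add: qD_def poly_0_coeff_0 coeff_pderiv coeff_Dz qnum_def)
next
  case False
  let ?n = "degree p"
  have a: "poly p x - poly p (z * x) = (\<Sum>i\<le>Suc ?n. coeff p i * (1 - z ^ i) * x ^ i)"
    using poly_as_sum[of p "Suc ?n"]
    by (simp add: sum_subtractf[symmetric] power_mult_distrib algebra_simps)
  have "x * poly (Dz z p) x = (\<Sum>i\<le>?n. coeff p (Suc i) * qnum z (int (Suc i)) * x ^ Suc i)"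
    using poly_as_sum[OF degree_Dz[of z p], of x]
    by (simp add: coeff_Dz sum_distrib_left algebra_simps)
  also have "\<dots> = (\<Sum>i\<le>Suc ?n. coeff p i * qnum z (int i) * x ^ i)"
    by (subst sum.atMost_Suc_shift) (simp add: qnum_def)
  finally have b0: "x * poly (Dz z p) x = (\<Sum>i\<le>Suc ?n. coeff p i * qnum z (int i) * x ^ i)" .
  have z1: "1 - z \<noteq> 0" using assms by simp
  have c: "(1 - z) * (\<Sum>i\<le>Suc ?n. coeff p i * qnum z (int i) * x ^ i)
      = (\<Sum>i\<le>Suc ?n. coeff p i * (1 - z ^ i) * x ^ i)"
    unfolding sum_distrib_left by (rule sum.cong) (use z1 in \<open>auto simp: qnum_nat\<close>)
  have b: "(1 - z) * (x * poly (Dz z p) x) = (\<Sum>i\<le>Suc ?n. coeff p i * (1 - z ^ i) * x ^ i)"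
    using b0 c by simp
  show ?thesis using False assms a b
    by (simp add: qD_def field_simps)
qed

lemma qD_poly_fun: "z \<noteq> 1 \<Longrightarrow> qD z (poly p) = poly (Dz z p)"
  using poly_Dz by blast



definition Top :: "real \<Rightarrow> real poly \<Rightarrow> real poly \<Rightarrow> real \<Rightarrow> real poly \<Rightarrow> real poly" where
  "Top q \<sigma>1 \<tau> lam p = \<sigma>1 * Dz (1/q) (Dz q p) + \<tau> * Dz q p + smult lam p"

lemma Top_add: "Top q \<sigma>1 \<tau> lam (p + r) = Top q \<sigma>1 \<tau> lam p + Top q \<sigma>1 \<tau> lam r"
  by (simp add: Top_def Dz_add smult_add_right algebra_simps)

lemma Top_diff: "Top q \<sigma>1 \<tau> lam (p - r) = Top q \<sigma>1 \<tau> lam p - Top q \<sigma>1 \<tau> lam r"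
  by (simp add: Top_def Dz_diff smult_diff_right algebra_simps)

lemma Top_0: "Top q \<sigma>1 \<tau> lam 0 = 0"
  using Top_diff[of q \<sigma>1 \<tau> lam 0 0] by simp

lemma coeff_lin: "coeff ([:a, b:] * r) i = a * coeff r i + (if i = 0 then 0 else b * coeff r (i - 1))"
  by (cases i) (simp_all add: mult_pCons_left coeff_pCons)

lemma coeff_Top:
  assumes "\<forall>j>k. coeff p j = 0" "k \<le> i"
  shows "coeff (Top q [:c0, c1:] [:t0, t1:] lam p) i = (t1 * qnum q (int i) + lam) * coeff p i"
proof -
  have z1: "coeff p (Suc i) = 0" "coeff p (Suc (Suc i)) = 0" using assms by auto
  show ?thesis
  proof (cases i)
    case 0
    then show ?thesis using z1 by (simp add: Top_def coeff_lin coeff_Dz qnum_def)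
  next
    case (Suc i')
    then show ?thesis using z1 by (simp add: Top_def coeff_lin coeff_Dz algebra_simps)
  qed
qed

lemma solve_Top:
  assumes "\<And>i. i < n \<Longrightarrow> t1 * qnum q (int i) + lam \<noteq> 0"
  shows "k \<le> n \<Longrightarrow> \<forall>j\<ge>k. coeff r j = 0 \<Longrightarrow>
     \<exists>s. (\<forall>j\<ge>k. coeff s j = 0) \<and> Top q [:c0, c1:] [:t0, t1:] lam s = r"
proof (induction k arbitrary: r)
  case 0
  then have "r = 0" by (simp add: poly_eq_iff)
  then show ?case using Top_0 by (intro exI[of _ 0]) auto
next
  case (Suc k)
  let ?T = "Top q [:c0, c1:] [:t0, t1:] lam"
  define \<mu> where "\<mu> = t1 * qnum q (int k) + lam"
  have mu: "\<mu> \<noteq> 0" using assms Suc.prems unfolding \<mu>_def by auto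
  define s0 where "s0 = monom (coeff r k / \<mu>) k"
  have ct: "coeff (?T s0) i = (if i = k then coeff r k else 0)" if "k \<le> i" for i
    using coeff_Top[of k s0 i q c0 c1 t0 t1 lam] that mu
    by (auto simp: s0_def coeff_monom \<mu>_def)
  have hr: "\<forall>j\<ge>k. coeff (r - ?T s0) j = 0"
    using ct Suc.prems by (auto simp: le_Suc_eq)
  have kn: "k \<le> n" using Suc.prems(1) by simp
  obtain s1 where s1: "\<forall>j\<ge>k. coeff s1 j = 0" "?T s1 = r - ?T s0"
    using Suc.IH[OF kn hr] by blast
  show ?case
  proof (intro exI[of _ "s0 + s1"] conjI)
    show "\<forall>j\<ge>Suc k. coeff (s0 + s1) j = 0" using s1(1) by (simp add: s0_def)
    show "?T (s0 + s1) = r" using s1 by (simp add: Top_add)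
  qed
qed

lemma exists_eigen:
  assumes "\<And>i. i < n \<Longrightarrow> t1 * qnum q (int i) + lam \<noteq> 0" "t1 * qnum q (int n) + lam = 0"
  shows "\<exists>P. degree P = n \<and> P \<noteq> 0 \<and> Top q [:c0, c1:] [:t0, t1:] lam P = 0"
proof -
  let ?T = "Top q [:c0, c1:] [:t0, t1:] lam"
  have "\<forall>j\<ge>n. coeff (?T (monom 1 n)) j = 0"
    using coeff_Top[of n "monom 1 n" _ q c0 c1 t0 t1 lam] assms(2) by (auto simp: coeff_monom)
  then obtain s where s: "\<forall>j\<ge>n. coeff s j = 0" "?T s = ?T (monom 1 n)"
    using solve_Top[OF assms(1), of n] by blast
  define P where "P = monom 1 n - s"
  have "coeff P n = 1" using s by (simp add: P_def)
  moreover have "\<forall>j>n. coeff P j = 0" using s by (simp add: P_def coeff_monom)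
  ultimately have "degree P = n"
    by (intro order_antisym degree_le le_degree) auto
  moreover have "?T P = 0" using s by (simp add: P_def Top_diff)
  moreover have "P \<noteq> 0" using \<open>coeff P n = 1\<close> by auto
  ultimately show ?thesis by blast
qed



definition Rf :: "real \<Rightarrow> real \<Rightarrow> real \<Rightarrow> real \<Rightarrow> real \<Rightarrow> real" where
  "Rf q a1 a2 a y = exp (1/2 * (log q y - 1) * ln y)
        * qpoch_inf (q * a2 / y) q * qpoch_inf (q * a / y) q / qpoch_inf (a1 / y) q"

lemma G_shift:
  fixes q y :: real
  assumes "0 < q" "q < 1" "0 < y"
  shows "exp (1/2 * (log q (y/q) - 1) * ln (y/q)) = exp (1/2 * (log q y - 1) * ln y) * q / y"
proof -
  have l: "ln q \<noteq> 0" using assms by simp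
  have e: "1/2 * (log q (y/q) - 1) * ln (y/q) = 1/2 * (log q y - 1) * ln y + (ln q - ln y)"
    using assms l by (simp add: log_def ln_div field_simps)
  show ?thesis unfolding e exp_add exp_diff using assms by simp
qed

lemma key_gen:
  fixes A B C y Qc G Qa Qb q :: real
  assumes "A \<noteq> 0" "B \<noteq> 0" "C \<noteq> 0" "y \<noteq> 0" "Qc \<noteq> 0"
  shows "G * q / y * Qa * Qb / Qc = G * ((A/y) * Qa) * ((B/y) * Qb) / ((C/y) * Qc) * (q * C / (A * B))"
  using assms by (simp add: field_simps)

lemma Rf_shift:
  fixes q a1 a2 b2 y :: real
  assumes "0 < q" "q < 1" "a1 < 0" "0 < a2" "a2 \<le> b2" "b2 \<le> y"
  shows "Rf q a1 a2 b2 (y/q) = Rf q a1 a2 b2 y * (q * (y - a1) / ((y - q*a2) * (y - q*b2)))"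
proof -
  have y0: "y > 0" using assms by linarith
  have qa2: "q * a2 < y" using mult_strict_right_mono[OF assms(2) assms(4)] assms(5,6) by linarith
  have b0: "0 < b2" using assms by linarith
  have qb2: "q * b2 < y" using mult_strict_right_mono[OF assms(2) b0] assms(6) by linarith
  have A: "qpoch_inf (q * a2 / y) q = (1 - q*a2/y) * qpoch_inf (q * a2 / (y/q)) q"
    using qpoch_shift[of q "q*a2/y"] assms y0 qa2 by (simp add: field_simps)
  have B: "qpoch_inf (q * b2 / y) q = (1 - q*b2/y) * qpoch_inf (q * b2 / (y/q)) q"
    using qpoch_shift[of q "q*b2/y"] assms y0 qb2 by (simp add: field_simps)
  have C: "qpoch_inf (a1 / y) q = (1 - a1/y) * qpoch_inf (a1 / (y/q)) q"
    using qpoch_shift[of q "a1/y"] assms y0 by (simp add: field_simps)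
  have pc: "qpoch_inf (a1 / (y/q)) q > 0"
  proof -
    have "a1/(y/q) < 0" using assms y0 by (intro divide_neg_pos) auto
    then have "a1/(y/q) < 1" by linarith
    then show ?thesis using assms(1,2) by (intro qpoch_pos)
  qed
  have n1: "1 - q*a2/y \<noteq> 0" "1 - q*b2/y \<noteq> 0" "1 - a1/y \<noteq> 0"
    using qa2 qb2 y0 assms by (auto simp: field_simps)
  have key: "G * q / y * Qa * Qb / Qc = G * ((1 - q*a2/y) * Qa) * ((1 - q*b2/y) * Qb) / ((1 - a1/y) * Qc)
      * (q * (y - a1) / ((y - q*a2) * (y - q*b2)))" if "Qc \<noteq> 0" for G Qa Qb Qc :: real
  proof -
    have d: "y - q*a2 \<noteq> 0" "y - q*b2 \<noteq> 0" "y - a1 \<noteq> 0" using qa2 qb2 y0 assms by auto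
    have e: "1 - q*a2/y = (y - q*a2)/y" "1 - q*b2/y = (y - q*b2)/y" "1 - a1/y = (y - a1)/y"
      using y0 by (auto simp: field_simps)
    show ?thesis unfolding e by (rule key_gen) (use d y0 that in auto)
  qed
  have L: "Rf q a1 a2 b2 (y/q) = exp (1/2 * (log q y - 1) * ln y) * q / y * qpoch_inf (q * a2 / (y/q)) q
      * qpoch_inf (q * b2 / (y/q)) q / qpoch_inf (a1 / (y/q)) q"
    unfolding Rf_def G_shift[OF assms(1,2) y0] by simp
  show ?thesis
    unfolding L key[OF pc[THEN less_imp_neq, symmetric]]
    unfolding Rf_def A[symmetric] B[symmetric] C[symmetric] ..
qed

lemma Rf_pos:
  fixes q a1 a2 b2 y :: real
  assumes "0 < q" "q < 1" "a1 < 0" "0 < a2" "a2 \<le> b2" "b2 \<le> y"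
  shows "Rf q a1 a2 b2 y > 0"
proof -
  have y0: "y > 0" using assms by linarith
  have qa2: "q * a2 < y" using mult_strict_right_mono[OF assms(2) assms(4)] assms(5,6) by linarith
  have b0: "0 < b2" using assms by linarith
  have qb2: "q * b2 < y" using mult_strict_right_mono[OF assms(2) b0] assms(6) by linarith
  have "qpoch_inf (q * a2 / y) q > 0" using qpoch_pos[of q "q*a2/y"] assms y0 qa2 by simp
  moreover have "qpoch_inf (q * b2 / y) q > 0" using qpoch_pos[of q "q*b2/y"] assms y0 qb2 by simp
  moreover have "qpoch_inf (a1 / y) q > 0" using qpoch_pos[of q "a1/y"] assms y0 by (simp add: divide_neg_pos)
  ultimately show ?thesis unfolding Rf_def by simp
qed

lemma aux0:
  fixes q x S T Y0 Ym Yp D :: real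
  assumes "q \<noteq> 0" "D \<noteq> 0" "x \<noteq> 0"
  shows "S * (((Y0 - Ym)/(D*x) - (Yp - Y0)/(D*(x/q)))/((-D/q)*x)) + T*((Y0-Ym)/(D*x))
   = q^2*S/(D^2*x^2)*(Yp - Y0) + q*(S + (-D/q)*x*T)/(D^2*x^2)*(Ym - Y0)"
  using assms by (simp add: field_simps power2_eq_square)

lemma aux1:
  fixes q x S T Y0 Ym Yp :: real
  assumes "0 < q" "q \<noteq> 1" "x \<noteq> 0"
  shows "S * (((Y0 - Ym)/((1-q)*x) - (Yp - Y0)/((1-q)*(x/q)))/((1-1/q)*x)) + T*((Y0-Ym)/((1-q)*x))
   = q^2*S/((1-q)^2*x^2)*(Yp - Y0) + q*(S + (1-1/q)*x*T)/((1-q)^2*x^2)*(Ym - Y0)"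
proof -
  have b: "1 - 1/q = -(1-q)/q" using assms by (simp add: field_simps)
  show ?thesis unfolding b using assms by (intro aux0) auto
qed

lemma lattice_op:
  fixes q x :: real and y :: "real \<Rightarrow> real"
  assumes "0 < q" "q < 1" "x \<noteq> 0"
  shows "poly \<sigma>1 x * qD (1/q) (qD q y) x + poly \<tau> x * qD q y x =
    q^2 * poly \<sigma>1 x / ((1-q)^2 * x^2) * (y (x/q) - y x)
    + poly (sigma2 q \<sigma>1 \<tau>) x / ((1-q)^2 * x^2) * (y (q*x) - y x)"
proof -
  have e: "q * (x/q) = x" "1/q * x = x/q" using assms by auto
  have nz: "x/q \<noteq> 0" using assms by simp
  have h: "qD (1/q) (qD q y) x = (((y x - y (q*x))/((1-q)*x)) - (y (x/q) - y x)/((1-q)*(x/q)))/((1-1/q)*x)"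
    using assms nz unfolding qD_def by (simp only: e if_False)
  have h2: "qD q y x = (y x - y (q*x))/((1-q)*x)" using assms unfolding qD_def by simp
  have s2: "poly (sigma2 q \<sigma>1 \<tau>) x = q*(poly \<sigma>1 x + (1-1/q)*x*poly \<tau> x)"
    by (simp add: sigma2_def)
  show ?thesis unfolding h h2 s2
    using aux1[of q x "poly \<sigma>1 x" "y x" "y (q*x)" "y (x/q)" "poly \<tau> x"] assms by simp
qed

lemma lagrange:
  fixes cc f g :: "nat \<Rightarrow> real"
  defines "Dop \<equiv> \<lambda>h j. cc j * (h (Suc j) - h j) + (if j = 0 then 0 else cc (j-1) * (h (j-1) - h j))"
  shows "(\<Sum>j<N. g j * Dop f j - f j * Dop g j) =
         (if N = 0 then 0 else cc (N-1) * (g (N-1) * f N - f (N-1) * g N))"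
proof (induction N)
  case 0 then show ?case by simp
next
  case (Suc N)
  then show ?case
    by (cases N) (simp_all add: Dop_def algebra_simps)
qed



lemma poly_bound:
  fixes p :: "real poly"
  shows "\<bar>poly p y\<bar> \<le> (\<Sum>i\<le>degree p. \<bar>coeff p i\<bar>) * (1 + \<bar>y\<bar>) ^ degree p"
proof -
  have "\<bar>poly p y\<bar> = \<bar>\<Sum>i\<le>degree p. coeff p i * y ^ i\<bar>" by (simp add: poly_altdef)
  also have "\<dots> \<le> (\<Sum>i\<le>degree p. \<bar>coeff p i * y ^ i\<bar>)" by (rule sum_abs)
  also have "\<dots> \<le> (\<Sum>i\<le>degree p. \<bar>coeff p i\<bar> * (1 + \<bar>y\<bar>) ^ degree p)"
  proof (rule sum_mono)
    fix i assume "i \<in> {..degree p}"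
    then have "\<bar>y\<bar> ^ i \<le> (1 + \<bar>y\<bar>) ^ i" and "(1 + \<bar>y\<bar>) ^ i \<le> (1 + \<bar>y\<bar>) ^ degree p"
      by (auto intro!: power_mono power_increasing)
    then show "\<bar>coeff p i * y ^ i\<bar> \<le> \<bar>coeff p i\<bar> * (1 + \<bar>y\<bar>) ^ degree p"
      by (simp add: abs_mult power_abs mult_left_mono)
  qed
  also have "\<dots> = (\<Sum>i\<le>degree p. \<bar>coeff p i\<bar>) * (1 + \<bar>y\<bar>) ^ degree p"
    by (simp add: sum_distrib_right)
  finally show ?thesis .
qed

locale wsetup =
  fixes q s1 a1 a2 b2 c :: real and \<sigma>1 \<sigma>2 :: "real poly"
  assumes q0: "0 < q" and q1: "q < 1" and a1n: "a1 < 0" and a2p: "0 < a2" and ab: "a2 \<le> b2"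
    and cpos: "0 < c"
    and s1e: "\<And>y. poly \<sigma>1 y = s1 * (y - a1)"
    and s2e: "\<And>y. poly \<sigma>2 y = c * q^2 * s1 * (y - a2) * (y - b2)"
begin

definition xs :: "nat \<Rightarrow> real" where "xs j = (1/q)^j * b2"
definition v :: "nat \<Rightarrow> real" where
  "v j = (1/q - 1) * b2 * (1/q)^j * (1/c)^j * Rf q a1 a2 b2 (xs j)"
definition r :: "real \<Rightarrow> real" where "r y = (y - a1) / (c * ((y - q*a2) * (y - q*b2)))"

lemma vaux: "q \<noteq> 0 \<Longrightarrow> c \<noteq> 0 \<Longrightarrow> D \<noteq> 0 \<Longrightarrow>
   K*(1/q)^Suc j*(1/c)^Suc j*(R*(q*N/D)) = K*(1/q)^j*(1/c)^j*R*(N/(c*D))"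
  for K R N D :: real by (simp add: field_simps)

lemma paux: "c \<noteq> 0 \<Longrightarrow> D \<noteq> 0 \<Longrightarrow> V * (N / (c * D)) * (c * s * D) = V * (s * N)"
  for V N D s :: real by (simp add: field_simps)

lemma raux: "c \<noteq> 0 \<Longrightarrow> E \<noteq> 0 \<Longrightarrow> y \<noteq> 0 \<Longrightarrow> 2*y/(c*(E*y*(E*y))) = 2/(c*E^2*y)"
  for E y :: real by (simp add: field_simps power2_eq_square)

lemma baux: "0 < Z \<Longrightarrow> 0 < y \<Longrightarrow> 4*W/Z \<le> y \<Longrightarrow> 2/(Z*y)*W \<le> 1/2"
  for Z y W :: real by (simp add: field_simps)

lemma b2p: "0 < b2" using a2p ab by linarith

lemma xs_ge: "b2 \<le> xs j"
proof -
  have "1 \<le> (1/q)^j" using q0 q1 by (intro one_le_power) simp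
  then show ?thesis unfolding xs_def using b2p mult_right_mono[of 1 "(1/q)^j" b2] by simp
qed

lemma xs_pos: "0 < xs j" using xs_ge b2p by (meson less_le_trans)

lemma xs_Suc: "xs (Suc j) = xs j / q" unfolding xs_def by simp

lemma xs_mono: "i \<le> j \<Longrightarrow> xs i \<le> xs j"
  unfolding xs_def using q0 q1 b2p by (intro mult_right_mono power_increasing) auto

lemma v_pos: "0 < v j"
  unfolding v_def using Rf_pos[OF q0 q1 a1n a2p ab xs_ge[of j]] q0 q1 b2p cpos by simp

lemma qlt: "q * a2 < xs j" "q * b2 < xs j"
proof -
  show "q * a2 < xs j" using mult_strict_right_mono[OF q1 a2p] ab xs_ge[of j] by linarith
  show "q * b2 < xs j" using mult_strict_right_mono[OF q1 b2p] xs_ge[of j] by linarith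
qed

lemma v_Suc: "v (Suc j) = v j * r (xs j)"
proof -
  let ?y = "xs j"
  have y: "b2 \<le> ?y" by (rule xs_ge)
  have R: "Rf q a1 a2 b2 (xs (Suc j)) = Rf q a1 a2 b2 ?y * (q * (?y - a1) / ((?y - q*a2) * (?y - q*b2)))"
    unfolding xs_Suc by (rule Rf_shift[OF q0 q1 a1n a2p ab y])
  have d: "(?y - q*a2) * (?y - q*b2) \<noteq> 0" using qlt[of j] by auto
  show ?thesis unfolding v_def R r_def using q0 cpos d by (intro vaux) auto
qed

lemma pearson: "v (Suc j) * poly \<sigma>2 (xs (Suc j)) = v j * poly \<sigma>1 (xs j)"
proof -
  let ?y = "xs j"
  have d: "?y - q*a2 \<noteq> 0" "?y - q*b2 \<noteq> 0" using qlt[of j] by auto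
  have "poly \<sigma>2 (?y / q) = c * s1 * ((?y - q*a2) * (?y - q*b2))"
    unfolding s2e using q0 by (simp add: field_simps power2_eq_square)
  then show ?thesis unfolding v_Suc xs_Suc s1e r_def using d cpos
    by (simp only: paux) simp
qed

lemma r_bound:
  assumes "b2 \<le> y" "-a1 \<le> y"
  shows "r y \<le> 2 / (c * (1-q)^2 * y)"
proof -
  have y0: "0 < y" using assms b2p by linarith
  have h1: "(1-q) * y \<le> y - q*a2" using assms ab q0 by (simp add: algebra_simps mult_left_mono)
  have h2: "(1-q) * y \<le> y - q*b2" using assms q0 by (simp add: algebra_simps mult_left_mono)
  have p: "0 < (1-q) * y" using q1 y0 by simp
  have "((1-q)*y) * ((1-q)*y) \<le> (y - q*a2) * (y - q*b2)"
    using h1 h2 p by (intro mult_mono) auto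
  then have den: "c * ((1-q)*y * ((1-q)*y)) \<le> c * ((y - q*a2) * (y - q*b2))"
    using cpos by (intro mult_left_mono) auto
  have "r y \<le> (2*y) / (c * ((1-q)*y * ((1-q)*y)))"
    unfolding r_def using den assms a1n cpos p by (intro frac_le) auto
  also have "\<dots> = 2 / (c * (1-q)^2 * y)" using y0 cpos q1 by (intro raux) auto
  finally show ?thesis .
qed

lemma r_nonneg: "0 \<le> r (xs j)"
  unfolding r_def using qlt[of j] xs_pos[of j] a1n cpos by (intro divide_nonneg_pos) auto

lemma u_summable: "summable (\<lambda>j. v j * (1 + xs j) ^ K)"
proof -
  define M where "M = max (-a1) (4*(1/q)^K/(c*(1-q)^2))"
  obtain N where N: "M/b2 < (1/q)^N" using real_arch_pow[of "1/q" "M/b2"] q0 q1 by auto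
  have xN: "M < xs N" using N b2p unfolding xs_def by (simp add: field_simps)
  show ?thesis
  proof (rule summable_ratio_test[of "1/2" N])
    fix j assume "N \<le> j"
    then have yM: "M < xs j" using xN xs_mono[of N j] by linarith
    let ?y = "xs j"
    have y0: "0 < ?y" by (rule xs_pos)
    have rb: "r ?y \<le> 2 / (c * (1-q)^2 * ?y)"
      using r_bound[OF xs_ge] yM unfolding M_def by auto
    have "4*(1/q)^K/(c*(1-q)^2) \<le> ?y" using yM unfolding M_def by auto
    then have "2 / (c * (1-q)^2 * ?y) * (1/q)^K \<le> 1/2"
      using y0 cpos q1 by (intro baux) auto
    moreover have "r ?y * (1/q)^K \<le> 2 / (c * (1-q)^2 * ?y) * (1/q)^K"
      using rb q0 by (intro mult_right_mono) auto
    ultimately have rq: "r ?y * (1/q)^K \<le> 1/2" by linarith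
    have pw: "(1 + ?y/q)^K \<le> (1/q)^K * (1 + ?y)^K"
    proof -
      have "1 + ?y/q \<le> (1 + ?y)/q" using q0 q1 by (simp add: field_simps)
      then have "(1 + ?y/q)^K \<le> ((1 + ?y)/q)^K" using y0 q0 by (intro power_mono) auto
      then show ?thesis by (simp add: power_divide field_simps)
    qed
    have "v (Suc j) * (1 + xs (Suc j))^K = v j * r ?y * (1 + ?y/q)^K"
      by (simp add: v_Suc xs_Suc)
    also have "\<dots> \<le> v j * r ?y * ((1/q)^K * (1 + ?y)^K)"
      using pw v_pos[of j] r_nonneg[of j] by (intro mult_left_mono) auto
    also have "\<dots> = (r ?y * (1/q)^K) * (v j * (1 + ?y)^K)" by simp
    also have "\<dots> \<le> 1/2 * (v j * (1 + ?y)^K)"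
      using rq v_pos[of j] y0 by (intro mult_right_mono) auto
    finally show "norm (v (Suc j) * (1 + xs (Suc j))^K) \<le> 1/2 * norm (v j * (1 + xs j)^K)"
      using v_pos[of j] v_pos[of "Suc j"] xs_pos[of j] xs_pos[of "Suc j"] by simp
  qed simp
qed

lemma vp_summable: "summable (\<lambda>j. v j * poly p (xs j))"
proof -
  define B where "B = (\<Sum>i\<le>degree p. \<bar>coeff p i\<bar>)"
  show ?thesis
  proof (rule summable_comparison_test'[of "\<lambda>j. B * (v j * (1 + xs j) ^ degree p)" 0])
    show "summable (\<lambda>j. B * (v j * (1 + xs j) ^ degree p))"
      by (intro summable_mult u_summable)
    fix j
    have "norm (v j * poly p (xs j)) = v j * \<bar>poly p (xs j)\<bar>" using v_pos[of j] by (simp add: abs_mult)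
    also have "\<dots> \<le> v j * (B * (1 + xs j) ^ degree p)"
      using poly_bound[of p "xs j"] xs_pos[of j] v_pos[of j] unfolding B_def
      by (intro mult_left_mono) auto
    finally show "norm (v j * poly p (xs j)) \<le> B * (v j * (1 + xs j) ^ degree p)" by (simp add: mult_ac)
  qed
qed

end


lemma gaux: "q \<noteq> 0 \<Longrightarrow> y \<noteq> 0 \<Longrightarrow> E \<noteq> 0 \<Longrightarrow> V * S / (E * y^2) = V * (q^2 * S / (E * (q*y)^2))"
  for q y E V S :: real by (simp add: field_simps power2_eq_square)

context wsetup begin

definition cc :: "nat \<Rightarrow> real" where
  "cc j = v j * (q^2 * poly \<sigma>1 (xs j) / ((1-q)^2 * (xs j)^2))"

definition eig :: "real poly \<Rightarrow> real \<Rightarrow> bool" where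
  "eig R l \<longleftrightarrow> (\<forall>y. y \<noteq> 0 \<longrightarrow> q^2 * poly \<sigma>1 y / ((1-q)^2 * y^2) * (poly R (y/q) - poly R y)
      + poly \<sigma>2 y / ((1-q)^2 * y^2) * (poly R (q*y) - poly R y) + l * poly R y = 0)"

lemma lattice_D:
  assumes "eig R l"
  shows "cc j * (poly R (xs (Suc j)) - poly R (xs j))
     + (if j = 0 then 0 else cc (j-1) * (poly R (xs (j-1)) - poly R (xs j))) = - l * v j * poly R (xs j)"
proof (cases j)
  case 0
  have x0: "xs 0 = b2" "xs (Suc 0) = b2 / q" by (simp_all add: xs_def)
  have z: "poly \<sigma>2 b2 = 0" by (simp add: s2e)
  have "q^2 * poly \<sigma>1 b2 / ((1-q)^2 * b2^2) * (poly R (b2/q) - poly R b2) + l * poly R b2 = 0"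
    using assms b2p unfolding eig_def by (auto simp: z dest: spec[of _ b2])
  then have "v 0 * (q^2 * poly \<sigma>1 b2 / ((1-q)^2 * b2^2) * (poly R (b2/q) - poly R b2) + l * poly R b2) = 0"
    by simp
  then show ?thesis using 0 x0 unfolding cc_def by (simp add: algebra_simps)
next
  case (Suc i)
  let ?y = "xs (Suc i)"
  have y0: "?y \<noteq> 0" using xs_pos[of "Suc i"] by simp
  have qy: "q * ?y = xs i" using q0 by (simp add: xs_Suc)
  have yq: "?y / q = xs (Suc (Suc i))" by (simp add: xs_Suc)
  have B: "v (Suc i) * (poly \<sigma>2 ?y / ((1-q)^2 * ?y^2)) = cc i"
  proof -
    have "v (Suc i) * (poly \<sigma>2 ?y / ((1-q)^2 * ?y^2)) = (v (Suc i) * poly \<sigma>2 ?y) / ((1-q)^2 * ?y^2)"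
      by simp
    also have "\<dots> = v i * poly \<sigma>1 (xs i) / ((1-q)^2 * ?y^2)" by (simp add: pearson)
    also have "\<dots> = cc i" unfolding cc_def qy[symmetric] using q0 q1 y0
      by (intro gaux) auto
    finally show ?thesis .
  qed
  have e: "q^2 * poly \<sigma>1 ?y / ((1-q)^2 * ?y^2) * (poly R (?y/q) - poly R ?y)
      + poly \<sigma>2 ?y / ((1-q)^2 * ?y^2) * (poly R (q*?y) - poly R ?y) + l * poly R ?y = 0"
    using assms y0 unfolding eig_def by blast
  have "v (Suc i) * (q^2 * poly \<sigma>1 ?y / ((1-q)^2 * ?y^2) * (poly R (?y/q) - poly R ?y)
      + poly \<sigma>2 ?y / ((1-q)^2 * ?y^2) * (poly R (q*?y) - poly R ?y) + l * poly R ?y) = 0"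
    using e by simp
  then have "cc (Suc i) * (poly R (?y/q) - poly R ?y)
      + (v (Suc i) * (poly \<sigma>2 ?y / ((1-q)^2 * ?y^2))) * (poly R (q*?y) - poly R ?y)
      + l * v (Suc i) * poly R ?y = 0"
    unfolding cc_def by (simp add: algebra_simps)
  then show ?thesis unfolding B qy yq using Suc by (simp add: algebra_simps)
qed

lemma ortho:
  assumes "eig P lP" "eig Q lQ" "lP \<noteq> lQ"
  shows "(\<lambda>j. v j * (poly P (xs j) * poly Q (xs j))) sums 0"
proof -
  define f where "f j = poly P (xs j)" for j
  define g where "g j = poly Q (xs j)" for j
  define Dop where "Dop h j = cc j * (h (Suc j) - h j) + (if j = 0 then 0 else cc (j-1) * (h (j-1) - h j))"
    for h :: "nat \<Rightarrow> real" and j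
  define W where "W N = (if N = 0 then 0 else cc (N-1) * (g (N-1) * f N - f (N-1) * g N))" for N
  have Df: "Dop f j = - lP * v j * f j" for j
    using lattice_D[OF assms(1), of j] unfolding Dop_def f_def .
  have Dg: "Dop g j = - lQ * v j * g j" for j
    using lattice_D[OF assms(2), of j] unfolding Dop_def g_def .
  have S: "(lQ - lP) * (\<Sum>j<N. v j * (f j * g j)) = W N" for N
  proof -
    have "(\<Sum>j<N. g j * Dop f j - f j * Dop g j) = W N"
      unfolding W_def Dop_def by (rule lagrange)
    moreover have "(\<Sum>j<N. g j * Dop f j - f j * Dop g j) = (lQ - lP) * (\<Sum>j<N. v j * (f j * g j))"
      unfolding Df Dg sum_distrib_left by (rule sum.cong) (simp_all add: algebra_simps)
    ultimately show ?thesis by simp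
  qed
  define Rp where "Rp = \<sigma>1 * (Q * pcompose P [:0, 1/q:] - P * pcompose Q [:0, 1/q:])"
  define K where "K = q^2 / ((1-q)^2 * b2^2)"
  have pR: "poly Rp (xs N) = poly \<sigma>1 (xs N) * (g N * f (Suc N) - f N * g (Suc N))" for N
    by (simp add: Rp_def f_def g_def poly_pcompose xs_Suc algebra_simps)
  have WS: "W (Suc N) = v N * (q^2 / ((1-q)^2 * (xs N)^2)) * poly Rp (xs N)" for N
    unfolding W_def cc_def pR by (simp add: mult_ac)
  have bnd: "norm (W (Suc N)) \<le> K * \<bar>v N * poly Rp (xs N)\<bar>" for N
  proof -
    have "q^2 / ((1-q)^2 * (xs N)^2) \<le> K"
      unfolding K_def using xs_ge[of N] b2p q1 q0
      by (intro divide_left_mono mult_left_mono power_mono mult_pos_pos) auto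
    moreover have "norm (W (Suc N)) = q^2 / ((1-q)^2 * (xs N)^2) * \<bar>v N * poly Rp (xs N)\<bar>"
      unfolding WS by (simp add: abs_mult mult_ac)
    ultimately show ?thesis by (metis abs_ge_zero mult_right_mono)
  qed
  have t0: "(\<lambda>N. v N * poly Rp (xs N)) \<longlonglongrightarrow> 0"
    by (rule summable_LIMSEQ_zero[OF vp_summable])
  have "(\<lambda>N. W (Suc N)) \<longlonglongrightarrow> 0"
  proof (rule Lim_null_comparison[OF always_eventually])
    show "\<forall>N. norm (W (Suc N)) \<le> K * \<bar>v N * poly Rp (xs N)\<bar>" using bnd by blast
    show "(\<lambda>N. K * \<bar>v N * poly Rp (xs N)\<bar>) \<longlonglongrightarrow> 0"
      using tendsto_mult_right_zero[OF tendsto_rabs_zero[OF t0], of K] by simp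
  qed
  then have Wt: "W \<longlonglongrightarrow> 0" by (rule LIMSEQ_imp_Suc)
  have "(\<lambda>N. W N / (lQ - lP)) \<longlonglongrightarrow> 0 / (lQ - lP)"
    by (intro tendsto_divide Wt tendsto_const) (use assms(3) in auto)
  moreover have "(\<lambda>N. W N / (lQ - lP)) = (\<lambda>N. \<Sum>j<N. v j * (f j * g j))"
    using S assms(3) by (auto simp: field_simps)
  ultimately show ?thesis unfolding sums_def f_def g_def by simp
qed

end


lemma qnum_inj:
  fixes q :: real
  assumes "0 < q" "q < 1" "qnum q (int i) = qnum q (int n)"
  shows "i = n"
proof -
  have "q ^ i = q ^ n" using assms(2,3) by (simp add: qnum_nat)
  then show ?thesis using assms(1,2)
    by (metis less_irrefl nat_neq_iff power_strict_decreasing_iff)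
qed

theorem theorem5p4:
  fixes q s1 a1 t0 t1 a2 b2 :: real and \<alpha> :: complex and \<sigma>1 \<tau> :: "real poly"
  assumes "0 < q" "q < 1"
    and "\<sigma>1 = [:- s1 * a1, s1:]" and "s1 \<noteq> 0" and "a1 \<noteq> 0"
    and "\<tau> = [:t0, t1:]" and "t1 \<noteq> 0"
    and "sigma2 q \<sigma>1 \<tau> = smult (poly (pderiv (pderiv (sigma2 q \<sigma>1 \<tau>))) 0 / 2) ([:- a2, 1:] * [:- b2, 1:])"
    and "a1 < 0" and "0 < a2" and "a2 \<le> b2"
    and "t1 / s1 < 0"
    and "exp (\<alpha> * of_real (ln q)) =
           of_real (q powi (-2) * (poly (pderiv (pderiv (sigma2 q \<sigma>1 \<tau>))) 0 / 2) / s1)"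
  shows "\<exists>(P :: nat \<Rightarrow> real poly) (d :: nat \<Rightarrow> complex).
           (\<forall>n. degree (P n) = n \<and> qEHT_solution q \<sigma>1 \<tau> (qEHT_lambda q \<sigma>1 \<tau> n) (poly (P n)))
         \<and> (\<forall>n. d n \<noteq> 0)
         \<and> (\<forall>m n. has_qint_inf q (\<lambda>x. of_real (poly (P n) x * poly (P m) x) * rho q \<alpha> a1 a2 b2 x) b2
                    (if m = n then d n else 0))"
proof -
  define K2 where "K2 = poly (pderiv (pderiv (sigma2 q \<sigma>1 \<tau>))) 0 / 2"
  define c where "c = q powi (-2) * K2 / s1"
  have coeff2: "coeff (sigma2 q \<sigma>1 \<tau>) 2 = (q - 1) * t1"
    using assms(1) by (simp add: sigma2_def assms(3,6) numeral_2_eq_2 coeff_lin field_simps)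
  have K2v: "K2 = (q - 1) * t1"
    unfolding K2_def poly_0_coeff_0 coeff_pderiv using coeff2 by (simp add: numeral_2_eq_2)
  have qp: "q powi (-2) = 1 / q^2" by (simp add: power_int_def power_inverse inverse_eq_divide power_one_over)
  have cpos: "0 < c"
  proof -
    have "0 < (q - 1) * (t1 / s1)" using assms(2,12) by (intro mult_neg_neg) auto
    then have h: "0 < ((q - 1) * (t1 / s1)) / q^2" using assms(1) by (intro divide_pos_pos) auto
    have "c = ((q - 1) * (t1 / s1)) / q^2" unfolding c_def qp K2v by simp
    with h show ?thesis by simp
  qed
  have ec: "exp (\<alpha> * of_real (ln q)) = of_real c" using assms(13) unfolding c_def K2_def .
  have cK: "c * q^2 * s1 = K2" unfolding c_def qp using assms(1,4) by simp
  have s2e: "poly (sigma2 q \<sigma>1 \<tau>) y = c * q^2 * s1 * (y - a2) * (y - b2)" for y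
  proof -
    have "poly (sigma2 q \<sigma>1 \<tau>) y = K2 * ((y - a2) * (y - b2))"
      by (subst assms(8)) (simp add: K2_def[symmetric] algebra_simps)
    then show ?thesis by (simp only: cK[symmetric])
  qed
  have s1e: "poly \<sigma>1 y = s1 * (y - a1)" for y by (simp add: assms(3) algebra_simps)
  interpret W: wsetup q s1 a1 a2 b2 c \<sigma>1 "sigma2 q \<sigma>1 \<tau>"
    by unfold_locales (use assms cpos s1e s2e in auto)
  define lam where "lam n = qEHT_lambda q \<sigma>1 \<tau> n" for n
  have lamv: "lam n = - qnum q (int n) * t1" for n
    unfolding lam_def qEHT_lambda_def by (simp add: assms(3,6) pderiv_pCons)
  have lam_inj: "lam m = lam n \<Longrightarrow> m = n" for m n
    using qnum_inj[OF assms(1,2), of m n] assms(7) unfolding lamv by simp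
  have "\<forall>n. \<exists>P. degree P = n \<and> P \<noteq> 0 \<and> Top q \<sigma>1 \<tau> (lam n) P = 0"
  proof
    fix n
    show "\<exists>P. degree P = n \<and> P \<noteq> 0 \<and> Top q \<sigma>1 \<tau> (lam n) P = 0"
      unfolding assms(3,6)
    proof (rule exists_eigen)
      fix i assume "i < n"
      then have "qnum q (int i) \<noteq> qnum q (int n)" using qnum_inj[OF assms(1,2), of i n] by auto
      then show "t1 * qnum q (int i) + lam n \<noteq> 0" unfolding lamv using assms(7)
        by (simp add: algebra_simps)
    next
      show "t1 * qnum q (int n) + lam n = 0" unfolding lamv by simp
    qed
  qed
  then obtain P where P: "\<And>n. degree (P n) = n" "\<And>n. P n \<noteq> 0" "\<And>n. Top q \<sigma>1 \<tau> (lam n) (P n) = 0"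
    using choice[of "\<lambda>n P. degree P = n \<and> P \<noteq> 0 \<and> Top q \<sigma>1 \<tau> (lam n) P = 0"] by blast
  have qd1: "qD q (poly p) = poly (Dz q p)" for p using assms(2) by (intro qD_poly_fun) simp
  have qd2: "qD (1/q) (poly p) = poly (Dz (1/q) p)" for p using assms(1,2) by (intro qD_poly_fun) simp
  have solP: "poly \<sigma>1 y * qD (1/q) (qD q (poly (P n))) y + poly \<tau> y * qD q (poly (P n)) y
      + lam n * poly (P n) y = 0" for n y
  proof -
    have "poly (Top q \<sigma>1 \<tau> (lam n) (P n)) y = 0" using P(3) by simp
    then show ?thesis unfolding qd1 qd2 Top_def by simp
  qed
  have eigP: "W.eig (P n) (lam n)" for n
    unfolding W.eig_def
  proof (intro allI impI)
    fix y :: real assume "y \<noteq> 0"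
    from lattice_op[of q y \<sigma>1 "poly (P n)" \<tau>, OF assms(1,2) this] solP[where n=n and y=y]
    show "q^2 * poly \<sigma>1 y / ((1-q)^2 * y^2) * (poly (P n) (y/q) - poly (P n) y)
      + poly (sigma2 q \<sigma>1 \<tau>) y / ((1-q)^2 * y^2) * (poly (P n) (q*y) - poly (P n) y)
      + lam n * poly (P n) y = 0" by simp
  qed
  define E where "E = exp (\<alpha> * of_real (ln b2))"
  have Enz: "E \<noteq> 0" unfolding E_def by simp
  have termeq: "of_real ((1/q - 1) * b2 * (1/q) ^ j) * (of_real (F ((1/q)^j * b2)) * rho q \<alpha> a1 a2 b2 ((1/q)^j * b2))
      = E * of_real (W.v j * F (W.xs j))" for F j
  proof -
    have xj: "(1/q)^j * b2 = W.xs j" by (simp add: W.xs_def)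
    have ln: "ln \<bar>W.xs j\<bar> = ln b2 - real j * ln q"
      using W.b2p assms(1) by (simp add: W.xs_def ln_mult ln_realpow ln_div)
    have ex: "exp (\<alpha> * of_real (ln \<bar>W.xs j\<bar>)) = E / of_real c ^ j"
    proof -
      have "\<alpha> * of_real (ln \<bar>W.xs j\<bar>) = \<alpha> * of_real (ln b2) - of_nat j * (\<alpha> * of_real (ln q))"
        unfolding ln by (simp add: algebra_simps)
      then show ?thesis unfolding E_def by (simp add: exp_diff exp_of_nat_mult ec)
    qed
    have rh: "rho q \<alpha> a1 a2 b2 (W.xs j) = exp (\<alpha> * of_real (ln \<bar>W.xs j\<bar>)) * of_real (Rf q a1 a2 b2 (W.xs j))"
      by (simp add: rho_def Rf_def)
    have c0: "(of_real c :: complex) \<noteq> 0" using cpos by simp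
    show ?thesis unfolding xj rh ex W.v_def using c0
      by (simp add: of_real_mult of_real_power of_real_divide power_divide field_simps)
  qed
  define S where "S n = (\<Sum>j. W.v j * (poly (P n) (W.xs j) * poly (P n) (W.xs j)))" for n
  define d where "d n = E * of_real (S n)" for n
  have summ: "summable (\<lambda>j. W.v j * (poly (P n) (W.xs j) * poly (P m) (W.xs j)))" for n m
    using W.vp_summable[of "P n * P m"] by simp
  have Spos: "0 < S n" for n
  proof -
    have "\<exists>i. poly (P n) (W.xs i) \<noteq> 0"
    proof (rule ccontr)
      assume "\<not> ?thesis"
      then have "range W.xs \<subseteq> {y. poly (P n) y = 0}" by auto
      then have fin: "finite (range W.xs)" using poly_roots_finite[OF P(2)[of n]] finite_subset by blast
      have "strict_mono W.xs"
      proof (rule strict_monoI_Suc)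
        fix j show "W.xs j < W.xs (Suc j)"
          unfolding W.xs_Suc using W.xs_pos[of j] assms(1,2) by (simp add: less_divide_eq)
      qed
      then have "inj W.xs" by (rule strict_mono_imp_inj_on)
      then show False using fin finite_imageD infinite_UNIV_nat by blast
    qed
    then obtain i where i: "poly (P n) (W.xs i) \<noteq> 0" by blast
    show ?thesis unfolding S_def
    proof (rule suminf_pos2[of _ i])
      show "summable (\<lambda>j. W.v j * (poly (P n) (W.xs j) * poly (P n) (W.xs j)))" by (rule summ)
      show "0 \<le> W.v j * (poly (P n) (W.xs j) * poly (P n) (W.xs j))" for j
        using W.v_pos[of j] by simp
      show "0 < W.v i * (poly (P n) (W.xs i) * poly (P n) (W.xs i))"
      proof -
        have sq: "0 < poly (P n) (W.xs i) * poly (P n) (W.xs i)"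
          using i not_real_square_gt_zero[of "poly (P n) (W.xs i)"] by blast
        show ?thesis by (rule mult_pos_pos[OF W.v_pos[of i] sq])
      qed
    qed
  qed
  show ?thesis
  proof (intro exI[of _ P] exI[of _ d] conjI allI)
    fix n
    show "degree (P n) = n" by (rule P(1))
    show "qEHT_solution q \<sigma>1 \<tau> (qEHT_lambda q \<sigma>1 \<tau> n) (poly (P n))"
      unfolding qEHT_solution_def using solP[where n=n] unfolding lam_def by blast
    show "d n \<noteq> 0" unfolding d_def using Enz Spos[of n] by simp
  next
    fix m n
    have base: "(\<lambda>j. E * of_real (W.v j * (poly (P n) (W.xs j) * poly (P m) (W.xs j))))
        sums (if m = n then d n else 0)"
    proof (cases "m = n")
      case True
      have "(\<lambda>j. W.v j * (poly (P n) (W.xs j) * poly (P m) (W.xs j))) sums S n"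
        unfolding S_def True by (rule summable_sums[OF summ])
      then have "(\<lambda>j. E * of_real (W.v j * (poly (P n) (W.xs j) * poly (P m) (W.xs j)))) sums (E * of_real (S n))"
        by (intro sums_mult sums_of_real)
      then show ?thesis using True unfolding d_def by simp
    next
      case False
      have "lam n \<noteq> lam m" using lam_inj False by metis
      then have "(\<lambda>j. W.v j * (poly (P n) (W.xs j) * poly (P m) (W.xs j))) sums 0"
        by (rule W.ortho[OF eigP eigP])
      then have "(\<lambda>j. E * of_real (W.v j * (poly (P n) (W.xs j) * poly (P m) (W.xs j)))) sums (E * of_real 0)"
        by (intro sums_mult sums_of_real)
      then show ?thesis using False by simp
    qed
    show "has_qint_inf q (\<lambda>x. of_real (poly (P n) x * poly (P m) x) * rho q \<alpha> a1 a2 b2 x) b2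
        (if m = n then d n else 0)"
      unfolding has_qint_inf_def termeq[where F="\<lambda>x. poly (P n) x * poly (P m) x"] by (rule base)
  qed
qed


end
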